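(* Let $X$ be a $d$-dimensional random vector with a probability density function, and let $X_1,\dots,X_n$ be i.i.d. copies of $X$. For $x_1,x_2\in\mathbb R^d$ define $G(x_1,x_2)=\Pr[x_1\le X\le x_2]$ and $G_n(x_1,x_2)=\frac1n\sum_{i=1}^n I_{\{X_i\in[x_1,x_2]\}}$. Then for any $\epsilon>0$, $$\Pr\Big[\sup_{x_1,x_2\in\mathbb R^d}|G_n(x_1,x_2)-G(x_1,x_2)|>\epsilon\Big]\le 2n^{2d}\exp(-2n\epsilon^2+16\epsilon d),$$ $$\Pr\Big[\sup_{x_1,x_2\in\mathbb R^d}|G_n(x_1,x_2)-G(x_1,x_2)|>\frac{4d}{n}+\epsilon\Big]\le 2n^{2d}\exp(-2n\epsilon^2).$$
   Context: Inequalities between vectors are componentwise; $[x_1,x_2]=\{y\in\mathbb R^d: x_1\le y\le x_2\}$ and $I$ denotes an indicator. *)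

theory Defs
  imports "HOL-Probability.Probability"
begin

definition box_prob :: "'a measure \<Rightarrow> ('a \<Rightarrow> real^'d) \<Rightarrow> real^'d \<Rightarrow> real^'d \<Rightarrow> real" where
  "box_prob M X x1 x2 = measure M {\<omega> \<in> space M. x1 \<le> X \<omega> \<and> X \<omega> \<le> x2}"

definition emp_box_prob :: "nat \<Rightarrow> (nat \<Rightarrow> 'a \<Rightarrow> real^'d) \<Rightarrow> 'a \<Rightarrow> real^'d \<Rightarrow> real^'d \<Rightarrow> real" where
  "emp_box_prob n Xs \<omega> x1 x2 = (1 / real n) * (\<Sum>i\<in>{1..n}. indicator {x1..x2} (Xs i \<omega>))"

end

theory Submission
  imports Defs
begin


lemma hyperplane_null: "{x::real^'d. x $ k = t} \<in> null_sets lborel"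
proof -
  have "negligible {x::real^'d. x \<bullet> axis k 1 = t}"
    by (rule negligible_standard_hyperplane) (simp add: axis_in_Basis_iff)
  hence "{x::real^'d. x $ k = t} \<in> null_sets lebesgue"
    by (simp add: negligible_iff_null_sets cart_eq_inner_axis)
  moreover have "{x::real^'d. x $ k = t} \<in> sets borel"
    by measurable
  ultimately show ?thesis
    using null_sets_completion_iff[of "{x::real^'d. x $ k = t}" lborel] by simp
qed

locale lem2 = prob_space M for M :: "'a measure" +
  fixes X :: "'a \<Rightarrow> real^'d" and Xs :: "nat \<Rightarrow> 'a \<Rightarrow> real^'d" and n :: nat
  assumes dens: "\<exists>f. distributed M lborel X f"
  and indep: "indep_vars (\<lambda>_. borel) Xs {1..n}"
  and idd: "\<forall>i\<in>{1..n}. distr M borel (Xs i) = distr M borel X"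
  and n1: "n \<ge> 1"
begin

lemma X_meas[measurable]: "X \<in> borel_measurable M"
  using dens distributed_measurable measurable_lborel1 by metis

lemma Xs_meas[measurable]: "i \<in> {1..n} \<Longrightarrow> Xs i \<in> borel_measurable M"
  using indep unfolding indep_vars_def by blast

lemma Xk_meas[measurable]: "(\<lambda>\<omega>. X \<omega> $ k) \<in> borel_measurable M"
  by (rule measurable_compose[OF X_meas borel_measurable_nth])

definition mu :: "'d \<Rightarrow> real measure" where
  "mu k = distr M borel (\<lambda>\<omega>. X \<omega> $ k)"

lemma mu_real: "real_distribution (mu k)"
  unfolding mu_def by (rule real_distribution_distr) measurable

lemma mu_meas: "A \<in> sets borel \<Longrightarrow> measure (mu k) A = prob {\<omega> \<in> space M. X \<omega> $ k \<in> A}"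
  unfolding mu_def by (subst measure_distr) (auto intro!: arg_cong[where f=prob])

lemma mu_atom: "measure (mu k) {t} = 0"
proof -
  obtain f where f: "distributed M lborel X f" using dens by blast
  have "measure (mu k) {t} = measure (distr M lborel X) {x. x $ k = t}"
    by (simp add: mu_meas measure_distr; intro arg_cong[where f=prob]; auto)
  also have "\<dots> = measure (density lborel f) {x. x $ k = t}"
    using f distributed_distr_eq_density by metis
  also have "\<dots> = 0"
  proof -
    have "{x. x $ k = t} \<in> null_sets (density lborel f)"
      using AE_not_in[OF hyperplane_null[of k t]] f
      by (subst null_sets_density_iff) (auto simp: distributed_def elim!: eventually_mono)
    thus ?thesis by (rule measure_eq_0_null_sets)
  qed
  finally show ?thesis .
qed

end


lemma cdf_surj_atomless:
  assumes "real_distribution N" and at: "\<And>t. measure N {t} = 0" and y: "0 < y" "y < 1"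
  shows "\<exists>t. cdf N t = y"
proof -
  interpret real_distribution N by fact
  have "eventually (\<lambda>x. cdf N x < y) at_bot"
    using order_tendstoD(2)[OF cdf_lim_at_bot y(1)] .
  then obtain a where a: "cdf N a < y" by (auto simp: eventually_at_bot_linorder)
  have "eventually (\<lambda>x. cdf N x > y) at_top"
    using order_tendstoD(1)[OF cdf_lim_at_top_prob y(2)] .
  then obtain b0 where "\<forall>x\<ge>b0. cdf N x > y" by (auto simp: eventually_at_top_linorder)
  then obtain b where b: "cdf N b > y" "b \<ge> a" by (metis max.cobounded1 max.cobounded2)
  have "continuous_on {a..b} (cdf N)"
    using at isCont_cdf by (intro continuous_at_imp_continuous_on) auto
  thus ?thesis using IVT'[of "cdf N" a y b] a b by force
qed

lemma cdf_mono_rd: "real_distribution N \<Longrightarrow> x \<le> y \<Longrightarrow> cdf N x \<le> cdf N y"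
  by (rule finite_borel_measure.cdf_nondecreasing[OF real_distribution.finite_borel_measure_M])

lemma slab_generic:
  fixes n j :: nat and Q :: "nat \<Rightarrow> real"
  assumes rd: "real_distribution N" and at: "\<And>t. measure N {t} = 0" and j: "j < n"
    and cq: "\<And>i. 1 \<le> i \<Longrightarrow> i < n \<Longrightarrow> cdf N (Q i) = real i / real n"
  shows "measure N {t. (j = 0 \<or> Q j \<le> t) \<and> (Suc j = n \<or> t \<le> Q (Suc j))} \<le> 1 / real n"
proof -
  interpret real_distribution N by fact
  define S where "S = {t. (j = 0 \<or> Q j \<le> t) \<and> (Suc j = n \<or> t \<le> Q (Suc j))}"
  have n0: "n > 0" using j by simp
  consider "j = 0" "Suc j = n" | "j = 0" "Suc j \<noteq> n" | "j \<noteq> 0" "Suc j = n" | "j \<noteq> 0" "Suc j \<noteq> n" by blast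
  hence "measure N S \<le> 1 / real n"
  proof cases
    case 1
    thus ?thesis using prob_le_1 by auto
  next
    case 2
    have "S = {..Q 1}" using 2 by (auto simp: S_def)
    thus ?thesis using cq[of 1] 2 j by (simp add: cdf_def)
  next
    case 3
    have "S \<subseteq> (UNIV - {..Q j}) \<union> {Q j}" using 3 by (auto simp: S_def)
    hence "measure N S \<le> measure N ((UNIV - {..Q j}) \<union> {Q j})"
      by (intro finite_measure_mono) auto
    also have "\<dots> \<le> measure N (UNIV - {..Q j}) + measure N {Q j}"
      by (intro measure_Un_le) auto
    also have "\<dots> = 1 - cdf N (Q j)"
      using prob_compl[of "{..Q j}"] at by (simp add: cdf_def)
    also have "\<dots> = 1 / real n" using cq[of j] 3 j n0 by (simp add: field_simps)
    finally show ?thesis .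
  next
    case 4
    have lt: "Q j < Q (Suc j)"
    proof (rule ccontr)
      assume "\<not> Q j < Q (Suc j)"
      hence "cdf N (Q (Suc j)) \<le> cdf N (Q j)" by (intro cdf_nondecreasing) auto
      thus False using cq[of j] cq[of "Suc j"] 4 j n0 by (auto simp: field_simps)
    qed
    have "S \<subseteq> {Q j<..Q (Suc j)} \<union> {Q j}" using 4 by (auto simp: S_def)
    hence "measure N S \<le> measure N ({Q j<..Q (Suc j)} \<union> {Q j})"
      by (intro finite_measure_mono) auto
    also have "\<dots> \<le> measure N {Q j<..Q (Suc j)} + measure N {Q j}"
      by (intro measure_Un_le) auto
    also have "\<dots> = cdf N (Q (Suc j)) - cdf N (Q j)"
      using cdf_diff_eq[OF lt] at by simp
    also have "\<dots> = 1 / real n" using cq[of j] cq[of "Suc j"] 4 j n0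
      by (simp add: field_simps)
    finally show ?thesis .
  qed
  thus ?thesis by (simp add: S_def)
qed

context lem2 begin

definition q :: "'d \<Rightarrow> nat \<Rightarrow> real" where
  "q k j = (SOME t. cdf (mu k) t = real j / real n)"

lemma cdf_q: "1 \<le> j \<Longrightarrow> j < n \<Longrightarrow> cdf (mu k) (q k j) = real j / real n"
  unfolding q_def
  by (rule someI_ex, rule cdf_surj_atomless[OF mu_real mu_atom]) (auto simp: field_simps)

lemma q_less: "1 \<le> i \<Longrightarrow> i < j \<Longrightarrow> j < n \<Longrightarrow> q k i < q k j"
proof (rule ccontr)
  assume h: "1 \<le> i" "i < j" "j < n" "\<not> q k i < q k j"
  have "cdf (mu k) (q k j) \<le> cdf (mu k) (q k i)" using h by (intro cdf_mono_rd[OF mu_real]) auto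
  thus False using h cdf_q[of i k] cdf_q[of j k] n1 by (auto simp: field_simps)
qed

lemma q_mono: "1 \<le> i \<Longrightarrow> i \<le> j \<Longrightarrow> j < n \<Longrightarrow> q k i \<le> q k j"
  using q_less[of i j k] by (cases "i = j") auto

definition slab :: "'d \<Rightarrow> nat \<Rightarrow> real set" where
  "slab k j = {t. (j = 0 \<or> q k j \<le> t) \<and> (Suc j = n \<or> t \<le> q k (Suc j))}"

lemma slab_borel: "slab k j \<in> sets borel"
  unfolding slab_def by measurable

lemma slab_prob: "j < n \<Longrightarrow> prob {\<omega> \<in> space M. X \<omega> $ k \<in> slab k j} \<le> 1 / real n"
  using slab_generic[OF mu_real[of k] mu_atom, where j=j and n=n and Q="q k", OF _ cdf_q] mu_meas[OF slab_borel]
  unfolding slab_def by simp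

end


context lem2 begin

definition Ival :: "'d \<Rightarrow> nat \<Rightarrow> nat \<Rightarrow> real set" where
  "Ival k a b = (if a < b then {t. (a = 0 \<or> q k a \<le> t) \<and> (b = n \<or> t \<le> q k b)} else {})"

definition lo :: "'d \<Rightarrow> real \<Rightarrow> nat" where
  "lo k c = Max {j. j < n \<and> (j = 0 \<or> q k j \<le> c)}"

definition hi :: "'d \<Rightarrow> real \<Rightarrow> nat" where
  "hi k e = Min {j. 1 \<le> j \<and> j \<le> n \<and> (j = n \<or> e < q k j)}"

lemma lo_props: "lo k c < n" "lo k c = 0 \<or> q k (lo k c) \<le> c"
  "\<And>j. lo k c < j \<Longrightarrow> j < n \<Longrightarrow> c < q k j"
proof -
  let ?A = "{j. j < n \<and> (j = 0 \<or> q k j \<le> c)}"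
  have fin: "finite ?A" by (rule finite_subset[of _ "{..<n}"]) auto
  have ne: "0 \<in> ?A" using n1 by auto
  have "lo k c \<in> ?A" unfolding lo_def using fin ne by (intro Max_in) auto
  thus "lo k c < n" "lo k c = 0 \<or> q k (lo k c) \<le> c" by auto
  fix j assume j: "lo k c < j" "j < n"
  show "c < q k j"
  proof (rule ccontr)
    assume "\<not> c < q k j"
    hence "j \<in> ?A" using j by auto
    hence "j \<le> lo k c" unfolding lo_def using fin by (intro Max_ge) auto
    thus False using j by simp
  qed
qed

lemma hi_props: "1 \<le> hi k e" "hi k e \<le> n" "hi k e = n \<or> e < q k (hi k e)"
  "\<And>j. 1 \<le> j \<Longrightarrow> j < hi k e \<Longrightarrow> q k j \<le> e"
proof -
  let ?A = "{j. 1 \<le> j \<and> j \<le> n \<and> (j = n \<or> e < q k j)}"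
  have fin: "finite ?A" by (rule finite_subset[of _ "{..n}"]) auto
  have ne: "n \<in> ?A" using n1 by auto
  have "hi k e \<in> ?A" unfolding hi_def using fin ne by (intro Min_in) auto
  thus "1 \<le> hi k e" "hi k e \<le> n" "hi k e = n \<or> e < q k (hi k e)" by auto
  fix j assume j: "1 \<le> j" "j < hi k e"
  show "q k j \<le> e"
  proof (rule ccontr)
    assume "\<not> q k j \<le> e"
    hence "j \<in> ?A" using j \<open>hi k e \<le> n\<close> by auto
    hence "hi k e \<le> j" unfolding hi_def using fin by (intro Min_le) auto
    thus False using j by simp
  qed
qed

lemma lo_hi_less: "c \<le> e \<Longrightarrow> lo k c < hi k e"
proof (rule ccontr)
  assume ce: "c \<le> e" and "\<not> lo k c < hi k e"
  hence le: "hi k e \<le> lo k c" by simp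
  have "lo k c \<noteq> 0" using le hi_props(1)[of k e] by simp
  hence a: "q k (lo k c) \<le> c" using lo_props(2)[of k c] by simp
  have "hi k e \<noteq> n" using le lo_props(1)[of k c] by simp
  hence b: "e < q k (hi k e)" using hi_props(3)[of k e] by simp
  have "q k (hi k e) \<le> q k (lo k c)" using le hi_props(1)[of k e] lo_props(1)[of k c]
    by (intro q_mono) auto
  thus False using a b ce by simp
qed

lemma outer_sub: "c \<le> t \<Longrightarrow> t \<le> e \<Longrightarrow> t \<in> Ival k (lo k c) (hi k e)"
  using lo_hi_less[of c e k] lo_props(2)[of k c] hi_props(3)[of k e]
  unfolding Ival_def by auto

lemma inner_sub: "t \<in> Ival k (lo k c + 1) (hi k e - 1) \<Longrightarrow> c \<le> t \<and> t \<le> e"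
proof -
  assume t: "t \<in> Ival k (lo k c + 1) (hi k e - 1)"
  hence lt: "lo k c + 1 < hi k e - 1" unfolding Ival_def by (auto split: if_splits)
  have hn: "hi k e - 1 \<noteq> n" using hi_props(1,2)[of k e] by simp
  have t1: "q k (lo k c + 1) \<le> t" "t \<le> q k (hi k e - 1)" using t lt hn unfolding Ival_def by auto
  have "c < q k (lo k c + 1)" using lt hi_props(2)[of k e] by (intro lo_props(3)) auto
  moreover have "q k (hi k e - 1) \<le> e" using lt by (intro hi_props(4)) auto
  ultimately show ?thesis using t1 by simp
qed

lemma gap_slab:
  assumes t: "t \<in> Ival k (lo k c) (hi k e)" and nt: "t \<notin> Ival k (lo k c + 1) (hi k e - 1)"
  shows "t \<in> slab k (lo k c) \<or> t \<in> slab k (hi k e - 1)"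
proof (rule ccontr)
  assume ns: "\<not> (t \<in> slab k (lo k c) \<or> t \<in> slab k (hi k e - 1))"
  define a where "a = lo k c"
  define b where "b = hi k e"
  have ab: "a < b" and t1: "a = 0 \<or> q k a \<le> t" and t2: "b = n \<or> t \<le> q k b"
    using t unfolding Ival_def a_def[symmetric] b_def[symmetric] by (auto split: if_splits)
  have b1: "1 \<le> b" "b \<le> n" using hi_props(1,2) b_def by auto
  have an: "a < n" using lo_props(1) a_def by auto
  have s1: "Suc a \<noteq> n" "q k (Suc a) < t" using ns t1 unfolding slab_def a_def[symmetric] by auto
  have sb: "Suc (b - 1) = b" using b1 by simp
  have s2: "b - 1 \<noteq> 0" "t < q k (b - 1)" using ns t2 unfolding slab_def b_def[symmetric] sb by auto
  have lt: "a + 1 < b - 1"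
  proof (rule ccontr)
    assume "\<not> a + 1 < b - 1"
    hence "q k (b - 1) \<le> q k (a + 1)" using s1 s2 an b1 by (intro q_mono) auto
    thus False using s1 s2 by simp
  qed
  have "t \<in> Ival k (a + 1) (b - 1)" using lt s1 s2 b1 unfolding Ival_def by auto
  thus False using nt a_def b_def by simp
qed

lemma Ival_borel: "Ival k a b \<in> sets borel"
  unfolding Ival_def by (cases "a < b") (simp_all, measurable)

end


context lem2 begin

definition PP :: "(real^'d) set \<Rightarrow> real" where
  "PP S = prob {\<omega> \<in> space M. X \<omega> \<in> S}"

definition EE :: "(real^'d) set \<Rightarrow> 'a \<Rightarrow> real" where
  "EE S \<omega> = (\<Sum>i\<in>{1..n}. indicator S (Xs i \<omega>)) / real n"

lemma hoeff:
  assumes S: "S \<in> sets borel" and s: "s \<ge> 0"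
  shows "prob {\<omega> \<in> space M. s \<le> \<bar>EE S \<omega> - PP S\<bar>} \<le> 2 * exp (- 2 * real n * s\<^sup>2)"
proof -
  have ind_meas: "(indicator S :: real^'d \<Rightarrow> real) \<in> borel_measurable borel"
    using S by measurable
  have HI: "Hoeffding_ineq_iid M {1..n} (\<lambda>i \<omega>. indicator S (Xs i \<omega>)) (\<lambda>\<omega>. indicator S (X \<omega>)) 0 1"
  proof unfold_locales
    show "indep_vars (\<lambda>_. borel) (\<lambda>i \<omega>. indicator S (Xs i \<omega>) :: real) {1..n}"
      using indep_vars_compose2[OF indep, of "\<lambda>_. indicator S" "\<lambda>_. borel"] ind_meas by simp
    fix i assume i: "i \<in> {1..n}"
    have "distr M borel (\<lambda>\<omega>. indicator S (Xs i \<omega>) :: real) = distr (distr M borel (Xs i)) borel (indicator S)"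
      using i ind_meas by (subst distr_distr) (auto simp: comp_def)
    also have "\<dots> = distr (distr M borel X) borel (indicator S)" using idd i by simp
    also have "\<dots> = distr M borel (\<lambda>\<omega>. indicator S (X \<omega>) :: real)"
      using ind_meas by (subst distr_distr) (auto simp: comp_def)
    finally show "distr M borel (\<lambda>\<omega>. indicator S (Xs i \<omega>) :: real) = distr M borel (\<lambda>\<omega>. indicator S (X \<omega>))" .
  next
    show "random_variable borel (\<lambda>\<omega>. indicator S (X \<omega>) :: real)"
      using ind_meas by measurable
  qed (auto simp: indicator_def)
  have exp: "expectation (\<lambda>\<omega>. indicator S (X \<omega>) :: real) = PP S"
  proof -
    have "expectation (\<lambda>\<omega>. indicator S (X \<omega>) :: real) = expectation (indicator (X -` S \<inter> space M))"
      by (intro Bochner_Integration.integral_cong) (auto simp: indicator_def)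
    also have "\<dots> = PP S" unfolding PP_def
      by (subst Bochner_Integration.integral_indicator) (auto intro!: arg_cong[where f=prob])
    finally show ?thesis .
  qed
  have "prob {\<omega> \<in> space M. \<bar>(\<Sum>i\<in>{1..n}. indicator S (Xs i \<omega>)) / real (card {1..n}) - expectation (\<lambda>\<omega>. indicator S (X \<omega>))\<bar> \<ge> s}
     \<le> 2 * exp (-2 * real (card {1..n}) * s\<^sup>2 / (1 - 0)\<^sup>2)"
    using n1 s by (intro Hoeffding_ineq_iid.Hoeffding_ineq_abs_ge'[OF HI]) auto
  thus ?thesis using exp unfolding EE_def by simp
qed

end


context lem2 begin

definition Box :: "('d \<Rightarrow> nat) \<Rightarrow> ('d \<Rightarrow> nat) \<Rightarrow> (real^'d) set" where
  "Box \<alpha> \<beta> = {x. \<forall>k. x $ k \<in> Ival k (\<alpha> k) (\<beta> k)}"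

lemma Box_borel: "Box \<alpha> \<beta> \<in> sets borel"
proof -
  have "Box \<alpha> \<beta> = (\<Inter>k. (\<lambda>x. x $ k) -` Ival k (\<alpha> k) (\<beta> k))"
    unfolding Box_def by auto
  also have "\<dots> \<in> sets borel"
    using Ival_borel by (intro sets.finite_INT) (auto intro!: measurable_sets_borel[OF borel_measurable_nth])
  finally show ?thesis .
qed

lemma EE_mono: "A \<subseteq> B \<Longrightarrow> EE A \<omega> \<le> EE B \<omega>"
  unfolding EE_def by (intro divide_right_mono sum_mono) (auto simp: indicator_def)

lemma EE_bounds: "0 \<le> EE A \<omega>" "EE A \<omega> \<le> 1"
proof -
  show "0 \<le> EE A \<omega>" unfolding EE_def by (intro divide_nonneg_nonneg sum_nonneg) auto
  have "(\<Sum>i\<in>{1..n}. indicator A (Xs i \<omega>) :: real) \<le> (\<Sum>i\<in>{1..n}. 1)"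
    by (intro sum_mono) (auto simp: indicator_def)
  thus "EE A \<omega> \<le> 1" unfolding EE_def using n1 by (simp add: divide_le_eq)
qed

lemma PP_mono: "A \<subseteq> B \<Longrightarrow> B \<in> sets borel \<Longrightarrow> PP A \<le> PP B"
  unfolding PP_def by (intro finite_measure_mono) auto

lemma Xset_sets: "S \<in> sets borel \<Longrightarrow> {\<omega> \<in> space M. X \<omega> \<in> S} \<in> sets M"
proof -
  assume "S \<in> sets borel"
  hence "X -` S \<inter> space M \<in> sets M" by (rule measurable_sets[OF X_meas])
  moreover have "{\<omega> \<in> space M. X \<omega> \<in> S} = X -` S \<inter> space M" by auto
  ultimately show ?thesis by simp
qed

lemma EE_empty: "EE {} \<omega> = 0" unfolding EE_def by simp
lemma PP_empty: "PP {} = 0" unfolding PP_def by simp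

definition Idx :: "(('d \<Rightarrow> nat) \<times> ('d \<Rightarrow> nat)) set" where
  "Idx = (PiE UNIV (\<lambda>_. {..<n})) \<times> (PiE UNIV (\<lambda>_. {1..n}))"

lemma Idx_finite: "finite Idx" unfolding Idx_def by (auto intro!: finite_PiE)

lemma Idx_card: "card Idx = n ^ (2 * CARD('d))"
  unfolding Idx_def by (simp add: card_cartesian_product card_PiE power_mult_distrib power_add mult_2 flip: power_mult)

definition Bad :: "real \<Rightarrow> ('d \<Rightarrow> nat) \<times> ('d \<Rightarrow> nat) \<Rightarrow> 'a set" where
  "Bad s p = {\<omega> \<in> space M. s \<le> \<bar>EE (Box (fst p) (snd p)) \<omega> - PP (Box (fst p) (snd p))\<bar>}"

lemma Bad_sets: "Bad s p \<in> sets M"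
proof -
  have "(\<lambda>\<omega>. EE (Box (fst p) (snd p)) \<omega>) \<in> borel_measurable M"
    unfolding EE_def using Box_borel by measurable
  thus ?thesis unfolding Bad_def by measurable
qed

lemma box_sandwich:
  fixes x1 x2 :: "real^'d" and s :: real and \<omega>
  assumes om: "\<omega> \<in> space M" and good: "\<forall>p\<in>Idx. \<omega> \<notin> Bad s p" and s: "s > 0"
  shows "\<bar>EE {x1..x2} \<omega> - PP {x1..x2}\<bar> < s + 2 * real CARD('d) / real n"
proof (cases "\<exists>k. x2 $ k < x1 $ k")
  case True
  hence "{x1..x2} = {}" by (auto simp: less_eq_vec_def not_le)
  hence "EE {x1..x2} \<omega> - PP {x1..x2} = 0" by (simp add: EE_empty PP_empty)
  moreover have "0 \<le> 2 * real CARD('d) / real n" by simp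
  ultimately show ?thesis using s by linarith
next
  case False
  hence ce: "\<And>k. x1 $ k \<le> x2 $ k" by (simp add: not_less)
  define \<alpha> where "\<alpha> = (\<lambda>k. lo k (x1 $ k))"
  define \<beta> where "\<beta> = (\<lambda>k. hi k (x2 $ k))"
  define Sp where "Sp = Box \<alpha> \<beta>"
  define Sm where "Sm = Box (\<lambda>k. \<alpha> k + 1) (\<lambda>k. \<beta> k - 1)"
  have in_idx: "(\<alpha>, \<beta>) \<in> Idx" unfolding Idx_def \<alpha>_def \<beta>_def
    using lo_props(1) hi_props(1,2) by auto
  have sub1: "{x1..x2} \<subseteq> Sp"
    unfolding Sp_def Box_def \<alpha>_def \<beta>_def by (auto simp: less_eq_vec_def intro!: outer_sub)
  have sub2: "Sm \<subseteq> {x1..x2}"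
  proof
    fix x assume "x \<in> Sm"
    have "x1 $ i \<le> x $ i \<and> x $ i \<le> x2 $ i" for i
    proof -
      have "x $ i \<in> Ival i (lo i (x1 $ i) + 1) (hi i (x2 $ i) - 1)"
        using \<open>x \<in> Sm\<close> unfolding Sm_def Box_def \<alpha>_def \<beta>_def by blast
      thus ?thesis by (rule inner_sub)
    qed
    thus "x \<in> {x1..x2}" by (simp add: less_eq_vec_def)
  qed
  have dev_p: "\<bar>EE Sp \<omega> - PP Sp\<bar> < s"
    using good in_idx om unfolding Bad_def Sp_def by fastforce
  have dev_m: "\<bar>EE Sm \<omega> - PP Sm\<bar> < s"
  proof (cases "\<forall>k. \<alpha> k + 1 < \<beta> k - 1")
    case True
    have "\<alpha> k + 1 < n \<and> 1 \<le> \<beta> k - 1 \<and> \<beta> k - 1 \<le> n" for k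
    proof -
      have "\<beta> k \<le> n" unfolding \<beta>_def by (rule hi_props(2))
      thus ?thesis using True[rule_format, of k] by arith
    qed
    hence "((\<lambda>k. \<alpha> k + 1), (\<lambda>k. \<beta> k - 1)) \<in> Idx" unfolding Idx_def
      by (auto simp: PiE_UNIV_domain)
    thus ?thesis using good om unfolding Bad_def Sm_def by fastforce
  next
    case False
    then obtain k where "\<not> \<alpha> k + 1 < \<beta> k - 1" by blast
    hence "Sm = {}" unfolding Sm_def Box_def Ival_def by auto
    thus ?thesis using s by (simp add: EE_empty PP_empty)
  qed
  have gap: "PP Sp - PP Sm \<le> 2 * real CARD('d) / real n"
  proof -
    define T where "T = (\<lambda>k. {\<omega> \<in> space M. X \<omega> $ k \<in> slab k (\<alpha> k)} \<union> {\<omega> \<in> space M. X \<omega> $ k \<in> slab k (\<beta> k - 1)})"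
    have Aset: "{\<omega> \<in> space M. X \<omega> $ k \<in> slab k j} \<in> sets M" for k j
    proof -
      have "(\<lambda>\<omega>. X \<omega> $ k) -` slab k j \<inter> space M \<in> sets M"
        by (rule measurable_sets[OF Xk_meas slab_borel])
      moreover have "{\<omega> \<in> space M. X \<omega> $ k \<in> slab k j} = (\<lambda>\<omega>. X \<omega> $ k) -` slab k j \<inter> space M" by auto
      ultimately show ?thesis by simp
    qed
    have Tsets: "T k \<in> sets M" for k
      unfolding T_def using Aset by auto
    have "PP Sp - PP Sm = prob ({\<omega> \<in> space M. X \<omega> \<in> Sp} - {\<omega> \<in> space M. X \<omega> \<in> Sm})"
      unfolding PP_def using sub1 sub2 Box_borel unfolding Sp_def Sm_def
      by (subst finite_measure_Diff) (auto intro!: Xset_sets)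
    also have "\<dots> \<le> prob (\<Union>k. T k)"
    proof (intro finite_measure_mono)
      show "(\<Union>k. T k) \<in> sets M" using Tsets by (intro sets.finite_UN) auto
      show "{\<omega> \<in> space M. X \<omega> \<in> Sp} - {\<omega> \<in> space M. X \<omega> \<in> Sm} \<subseteq> (\<Union>k. T k)"
      proof
        fix w assume w: "w \<in> {\<omega> \<in> space M. X \<omega> \<in> Sp} - {\<omega> \<in> space M. X \<omega> \<in> Sm}"
        then obtain k where "X w $ k \<in> Ival k (\<alpha> k) (\<beta> k)" "X w $ k \<notin> Ival k (\<alpha> k + 1) (\<beta> k - 1)"
          unfolding Sp_def Sm_def Box_def by auto
        hence "X w $ k \<in> slab k (\<alpha> k) \<or> X w $ k \<in> slab k (\<beta> k - 1)"
          unfolding \<alpha>_def \<beta>_def by (rule gap_slab)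
        thus "w \<in> (\<Union>k. T k)" using w unfolding T_def by auto
      qed
    qed
    also have "\<dots> \<le> (\<Sum>k\<in>UNIV. prob (T k))"
      using Tsets by (intro finite_measure_subadditive_finite) auto
    also have "\<dots> \<le> (\<Sum>k\<in>(UNIV::'d set). 2 / real n)"
    proof (intro sum_mono)
      fix k :: 'd
      have "prob (T k) \<le> prob {\<omega> \<in> space M. X \<omega> $ k \<in> slab k (\<alpha> k)} + prob {\<omega> \<in> space M. X \<omega> $ k \<in> slab k (\<beta> k - 1)}"
        unfolding T_def by (rule measure_Un_le[OF Aset Aset])
      also have "\<dots> \<le> 1 / real n + 1 / real n"
      proof (rule add_mono)
        show "prob {\<omega> \<in> space M. X \<omega> $ k \<in> slab k (\<alpha> k)} \<le> 1 / real n"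
          unfolding \<alpha>_def by (rule slab_prob[OF lo_props(1)])
        have "\<beta> k - 1 < n" using hi_props(1,2)[of k "x2 $ k"] unfolding \<beta>_def by arith
        thus "prob {\<omega> \<in> space M. X \<omega> $ k \<in> slab k (\<beta> k - 1)} \<le> 1 / real n"
          by (rule slab_prob)
      qed
      finally show "prob (T k) \<le> 2 / real n" by simp
    qed
    also have "\<dots> = 2 * real CARD('d) / real n" by simp
    finally show ?thesis .
  qed
  have "EE Sm \<omega> \<le> EE {x1..x2} \<omega>" "EE {x1..x2} \<omega> \<le> EE Sp \<omega>"
    using sub1 sub2 by (auto intro!: EE_mono)
  moreover have "PP Sm \<le> PP {x1..x2}" "PP {x1..x2} \<le> PP Sp"
    using sub1 sub2 Box_borel unfolding Sp_def Sm_def by (auto intro!: PP_mono)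
  ultimately show ?thesis using dev_p dev_m gap by (simp add: abs_less_iff)
qed

end


context lem2 begin

lemma main_bound:
  assumes s: "s > 0"
  shows "prob {\<omega> \<in> space M.
            (SUP p\<in>UNIV. \<bar>emp_box_prob n Xs \<omega> (fst p) (snd p) - box_prob M X (fst p) (snd p)\<bar>)
              > s + 2 * real CARD('d) / real n}
         \<le> 2 * real n ^ (2 * CARD('d)) * exp (- 2 * real n * s\<^sup>2)"
proof -
  let ?t = "s + 2 * real CARD('d) / real n"
  have eq1: "emp_box_prob n Xs \<omega> x1 x2 = EE {x1..x2} \<omega>" for \<omega> x1 x2
    unfolding emp_box_prob_def EE_def by simp
  have eq2: "box_prob M X x1 x2 = PP {x1..x2}" for x1 x2
    unfolding box_prob_def PP_def by (intro arg_cong[where f=prob]) auto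
  have sub: "{\<omega> \<in> space M.
            (SUP p\<in>UNIV. \<bar>emp_box_prob n Xs \<omega> (fst p) (snd p) - box_prob M X (fst p) (snd p)\<bar>) > ?t}
          \<subseteq> (\<Union>p\<in>Idx. Bad s p)"
  proof
    fix \<omega> assume w: "\<omega> \<in> {\<omega> \<in> space M.
            (SUP p\<in>UNIV. \<bar>emp_box_prob n Xs \<omega> (fst p) (snd p) - box_prob M X (fst p) (snd p)\<bar>) > ?t}"
    show "\<omega> \<in> (\<Union>p\<in>Idx. Bad s p)"
    proof (rule ccontr)
      assume "\<omega> \<notin> (\<Union>p\<in>Idx. Bad s p)"
      hence good: "\<forall>p\<in>Idx. \<omega> \<notin> Bad s p" by blast
      have "(SUP p\<in>UNIV. \<bar>emp_box_prob n Xs \<omega> (fst p) (snd p) - box_prob M X (fst p) (snd p)\<bar>) \<le> ?t"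
      proof (rule cSUP_least)
        fix p :: "(real^'d) \<times> (real^'d)"
        show "\<bar>emp_box_prob n Xs \<omega> (fst p) (snd p) - box_prob M X (fst p) (snd p)\<bar> \<le> ?t"
          using box_sandwich[of \<omega> s "fst p" "snd p"] w good s unfolding eq1 eq2 by simp
      qed simp
      thus False using w by simp
    qed
  qed
  have "prob {\<omega> \<in> space M.
            (SUP p\<in>UNIV. \<bar>emp_box_prob n Xs \<omega> (fst p) (snd p) - box_prob M X (fst p) (snd p)\<bar>) > ?t}
        \<le> prob (\<Union>p\<in>Idx. Bad s p)"
    using sub Bad_sets Idx_finite by (intro finite_measure_mono) auto
  also have "\<dots> \<le> (\<Sum>p\<in>Idx. prob (Bad s p))"
    using Bad_sets Idx_finite by (intro finite_measure_subadditive_finite) auto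
  also have "\<dots> \<le> (\<Sum>p\<in>Idx. 2 * exp (- 2 * real n * s\<^sup>2))"
    unfolding Bad_def using s Box_borel by (intro sum_mono hoeff) auto
  also have "\<dots> = 2 * real n ^ (2 * CARD('d)) * exp (- 2 * real n * s\<^sup>2)"
    using Idx_card by simp
  finally show ?thesis .
qed

end

theorem lemma2:
  fixes M :: "'a measure" and X :: "'a \<Rightarrow> real^'d" and Xs :: "nat \<Rightarrow> 'a \<Rightarrow> real^'d"
    and n :: nat and \<epsilon> :: real
  assumes "prob_space M"
    and "\<exists>f. distributed M lborel X f"
    and "prob_space.indep_vars M (\<lambda>_. borel) Xs {1..n}"
    and "\<forall>i\<in>{1..n}. distr M borel (Xs i) = distr M borel X"
    and "n \<ge> 1"
    and "\<epsilon> > 0"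
  shows "measure M {\<omega> \<in> space M.
            (SUP p\<in>UNIV. \<bar>emp_box_prob n Xs \<omega> (fst p) (snd p) - box_prob M X (fst p) (snd p)\<bar>) > \<epsilon>}
           \<le> 2 * real n ^ (2 * CARD('d)) * exp (- 2 * real n * \<epsilon>\<^sup>2 + 16 * \<epsilon> * real CARD('d))
       \<and> measure M {\<omega> \<in> space M.
            (SUP p\<in>UNIV. \<bar>emp_box_prob n Xs \<omega> (fst p) (snd p) - box_prob M X (fst p) (snd p)\<bar>)
              > 4 * real CARD('d) / real n + \<epsilon>}
           \<le> 2 * real n ^ (2 * CARD('d)) * exp (- 2 * real n * \<epsilon>\<^sup>2)"
proof -
  interpret lem2 M X Xs n
    by (intro lem2.intro lem2_axioms.intro assms(1-5))
  define d where "d = real CARD('d)"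
  have n0: "real n > 0" using assms(5) by simp
  have d0: "d > 0" unfolding d_def by simp
  have npow: "real n ^ (2 * CARD('d)) \<ge> 1" using assms(5) by simp
  let ?D = "\<lambda>\<omega>. (SUP p\<in>UNIV. \<bar>emp_box_prob n Xs \<omega> (fst p) (snd p) - box_prob M X (fst p) (snd p)\<bar>)"
  have c1: "prob {\<omega> \<in> space M. ?D \<omega> > \<epsilon>}
           \<le> 2 * real n ^ (2 * CARD('d)) * exp (- 2 * real n * \<epsilon>\<^sup>2 + 16 * \<epsilon> * d)"
  proof (cases "\<epsilon> \<le> 2 * d / real n")
    case True
    have h: "real n * \<epsilon> \<le> 2 * d" using True n0 by (simp add: field_simps)
    have ed: "0 \<le> \<epsilon> * d" using assms(6) d0 by simp
    have "2 * real n * \<epsilon>\<^sup>2 = 2 * \<epsilon> * (real n * \<epsilon>)" by (simp add: power2_eq_square)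
    also have "\<dots> \<le> 2 * \<epsilon> * (2 * d)" using h assms(6) by (intro mult_left_mono) auto
    also have "\<dots> = 4 * (\<epsilon> * d)" by simp
    finally have "2 * real n * \<epsilon>\<^sup>2 \<le> 16 * \<epsilon> * d" using ed by linarith
    hence E1: "exp (- 2 * real n * \<epsilon>\<^sup>2 + 16 * \<epsilon> * d) \<ge> 1" by simp
    have "1 * 1 \<le> real n ^ (2 * CARD('d)) * exp (- 2 * real n * \<epsilon>\<^sup>2 + 16 * \<epsilon> * d)"
      using npow E1 by (intro mult_mono) auto
    moreover have "prob {\<omega> \<in> space M. ?D \<omega> > \<epsilon>} \<le> 1" by (rule prob_le_1)
    ultimately show ?thesis by linarith
  next
    case False
    define s where "s = \<epsilon> - 2 * d / real n"
    have s0: "s > 0" using False unfolding s_def by simp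
    have "\<epsilon> = s + 2 * real CARD('d) / real n" unfolding s_def d_def by simp
    hence "prob {\<omega> \<in> space M. ?D \<omega> > \<epsilon>} \<le> 2 * real n ^ (2 * CARD('d)) * exp (- 2 * real n * s\<^sup>2)"
      using main_bound[OF s0] by simp
    also have "\<dots> \<le> 2 * real n ^ (2 * CARD('d)) * exp (- 2 * real n * \<epsilon>\<^sup>2 + 16 * \<epsilon> * d)"
    proof -
      have e1: "- 2 * real n * s\<^sup>2 = - 2 * real n * \<epsilon>\<^sup>2 + 8 * (\<epsilon> * d) - 8 * (d\<^sup>2 / real n)"
        unfolding s_def using n0 by (simp add: power2_eq_square field_simps)
      have "d\<^sup>2 / real n \<ge> 0" using n0 by simp
      moreover have "0 \<le> \<epsilon> * d" using assms(6) d0 by simp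
      moreover have "16 * \<epsilon> * d = 16 * (\<epsilon> * d)" by simp
      ultimately have "- 2 * real n * s\<^sup>2 \<le> - 2 * real n * \<epsilon>\<^sup>2 + 16 * \<epsilon> * d"
        using e1 by linarith
      thus ?thesis using npow by (intro mult_left_mono) auto
    qed
    finally show ?thesis .
  qed
  have c2: "prob {\<omega> \<in> space M. ?D \<omega> > 4 * real CARD('d) / real n + \<epsilon>}
           \<le> 2 * real n ^ (2 * CARD('d)) * exp (- 2 * real n * \<epsilon>\<^sup>2)"
  proof -
    define s where "s = \<epsilon> + 2 * d / real n"
    have "2 * d / real n \<ge> 0" using d0 n0 by simp
    hence s0: "s > 0" "s \<ge> \<epsilon>" using assms(6) unfolding s_def by linarith+
    have "4 * real CARD('d) / real n + \<epsilon> = s + 2 * real CARD('d) / real n"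
      unfolding s_def d_def by (simp add: field_simps)
    hence "prob {\<omega> \<in> space M. ?D \<omega> > 4 * real CARD('d) / real n + \<epsilon>}
        \<le> 2 * real n ^ (2 * CARD('d)) * exp (- 2 * real n * s\<^sup>2)"
      using main_bound[OF s0(1)] by simp
    also have "\<dots> \<le> 2 * real n ^ (2 * CARD('d)) * exp (- 2 * real n * \<epsilon>\<^sup>2)"
    proof -
      have "\<epsilon>\<^sup>2 \<le> s\<^sup>2" using s0 assms(6) by (intro power_mono) auto
      hence "- 2 * real n * s\<^sup>2 \<le> - 2 * real n * \<epsilon>\<^sup>2" using n0 by simp
      thus ?thesis using npow by (intro mult_left_mono) auto
    qed
    finally show ?thesis .
  qed
  show ?thesis using c1 c2 unfolding d_def by simp
qed

end
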